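(* Let $V$ be a filled sparsity pattern, $X\in\mathbb S^n_V$ positive definite and $Y\in\mathbb S^n_V$. Let $X+tY=L(t)D(t)L(t)^T$ ($L(t)$ unit lower triangular, $D(t)$ positive diagonal) for $t$ near $0$, $L=L(0)$, $D=D(0)$, and $L',D'$ the derivatives at $t=0$. Let $S=\mathcal P(X^{-1})$ and $T=\mathcal P(X^{-1}YX^{-1})$ (so $T=-\frac{d}{dt}\mathcal P((X+tY)^{-1})|_{t=0}$). Then for every $j$, $$\begin{bmatrix}1&L_{I_j j}^T\\0&I\end{bmatrix}\begin{bmatrix}T_{jj}&T_{I_j j}^T\\ T_{I_j j}&T_{I_jI_j}\end{bmatrix}\begin{bmatrix}1&0\\ L_{I_j j}&I\end{bmatrix}=\begin{bmatrix}D'_{jj}/D_{jj}^2&(S_{I_jI_j}L'_{I_j j})^T\\ S_{I_jI_j}L'_{I_j j}&T_{I_jI_j}\end{bmatrix}.$$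
   Context: A symmetric sparsity pattern $V$ is a set of pairs $(i,j)$ with $1\le j\le i\le n$ containing all $(i,i)$; it is filled (chordal) if $i>j>k$, $(i,k)\in V$, $(j,k)\in V$ imply $(i,j)\in V$. $\mathbb S^n_V$ is the set of real symmetric $n\times n$ matrices with $X_{ij}=X_{ji}=0$ whenever $i\ge j$ and $(i,j)\notin V$. $\mathcal P$ is the projection onto $\mathbb S^n_V$: $\mathcal P(A)_{ij}=A_{ij}$ if $(\max(i,j),\min(i,j))\in V$ and $0$ otherwise. For each $j$, $I_j=\{i>j:(i,j)\in V\}$ (sorted increasingly). $A_{IJ}$ is the submatrix with rows $I$ and columns $J$; $A_{Ij}$ the part of column $j$ with rows in $I$. *)

theory Defs
  imports Complex_Main "Jordan_Normal_Form.Gauss_Jordan_Elimination" "Jordan_Normal_Form.DL_Submatrix"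
begin

text \<open>Indices are 0-based: rows/columns range over 0..n-1. A symmetric sparsity
  pattern is a set of pairs (i,j) with j \<le> i < n containing every (i,i).\<close>

definition sparsity_pattern :: "nat \<Rightarrow> (nat \<times> nat) set \<Rightarrow> bool" where
  "sparsity_pattern n V \<longleftrightarrow> V \<subseteq> {(i,j). j \<le> i \<and> i < n} \<and> (\<forall>i<n. (i,i) \<in> V)"

definition filled_pattern :: "(nat \<times> nat) set \<Rightarrow> bool" where
  "filled_pattern V \<longleftrightarrow> (\<forall>i j k. i > j \<and> j > k \<and> (i,k) \<in> V \<and> (j,k) \<in> V \<longrightarrow> (i,j) \<in> V)"

definition in_SV :: "nat \<Rightarrow> (nat \<times> nat) set \<Rightarrow> real mat \<Rightarrow> bool" where
  "in_SV n V X \<longleftrightarrow> X \<in> carrier_mat n n \<and> transpose_mat X = X \<and>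
     (\<forall>i<n. \<forall>j<n. (max i j, min i j) \<notin> V \<longrightarrow> X $$ (i,j) = 0)"

definition projP :: "(nat \<times> nat) set \<Rightarrow> real mat \<Rightarrow> real mat" where
  "projP V A = mat (dim_row A) (dim_col A)
     (\<lambda>(i,j). if (max i j, min i j) \<in> V then A $$ (i,j) else 0)"

definition Iset :: "(nat \<times> nat) set \<Rightarrow> nat \<Rightarrow> nat set" where
  "Iset V j = {i. i > j \<and> (i,j) \<in> V}"

definition pos_def_mat :: "nat \<Rightarrow> real mat \<Rightarrow> bool" where
  "pos_def_mat n X \<longleftrightarrow> X \<in> carrier_mat n n \<and> transpose_mat X = X \<and>
     (\<forall>v \<in> carrier_vec n. v \<noteq> 0\<^sub>v n \<longrightarrow> v \<bullet> (X *\<^sub>v v) > 0)"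

definition unit_lower_triangular :: "nat \<Rightarrow> real mat \<Rightarrow> bool" where
  "unit_lower_triangular n L \<longleftrightarrow> L \<in> carrier_mat n n \<and> (\<forall>i<n. L $$ (i,i) = 1) \<and>
     (\<forall>i<n. \<forall>j<n. i < j \<longrightarrow> L $$ (i,j) = 0)"

definition pos_diagonal :: "nat \<Rightarrow> real mat \<Rightarrow> bool" where
  "pos_diagonal n D \<longleftrightarrow> D \<in> carrier_mat n n \<and> diagonal_mat D \<and> (\<forall>i<n. D $$ (i,i) > 0)"

definition mat_inv :: "real mat \<Rightarrow> real mat" where
  "mat_inv A = the (mat_inverse A)"

end

theory Submission
  imports Defs "Jordan_Normal_Form.Determinant"
begin

lemma sum_single:
  assumes "finite S" "k \<in> S" "\<And>a. a \<in> S \<Longrightarrow> a \<noteq> k \<Longrightarrow> f a = 0"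
  shows "sum f S = f k"
proof -
  have "sum f S = f k + sum f (S - {k})" using assms by (simp add: sum.remove)
  also have "sum f (S - {k}) = 0" using assms by (intro sum.neutral) auto
  finally show ?thesis by simp
qed

lemma mult_entry:
  assumes "A \<in> carrier_mat n n" "B \<in> carrier_mat n n" "i < n" "k < n"
  shows "(A * B) $$ (i,k) = (\<Sum>a<n. A $$ (i,a) * B $$ (a,k))"
  using assms by (simp add: scalar_prod_def atLeast0LessThan)

lemma diag_mult_entry:
  assumes L: "L \<in> carrier_mat n n" and D: "D \<in> carrier_mat n n" and M: "M \<in> carrier_mat n n"
    and dD: "diagonal_mat D" and i: "i < n" and k: "k < n"
  shows "(L * D * M) $$ (i,k) = (\<Sum>a<n. L $$ (i,a) * D $$ (a,a) * M $$ (a,k))"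
proof -
  have LD: "(L * D) $$ (i,a) = L $$ (i,a) * D $$ (a,a)" if a: "a < n" for a
  proof -
    have "(L * D) $$ (i,a) = (\<Sum>b<n. L $$ (i,b) * D $$ (b,a))" using mult_entry[OF L D i a] .
    also have "\<dots> = L $$ (i,a) * D $$ (a,a)"
      using dD D a by (intro sum_single) (auto simp: diagonal_mat_def)
    finally show ?thesis .
  qed
  have "(L * D * M) $$ (i,k) = (\<Sum>a<n. (L*D) $$ (i,a) * M $$ (a,k))"
    using L D M i k by (intro mult_entry) auto
  also have "\<dots> = (\<Sum>a<n. L $$ (i,a) * D $$ (a,a) * M $$ (a,k))"
    using LD by (intro sum.cong) auto
  finally show ?thesis .
qed

lemma chol_sparse:
  fixes Lf :: "nat \<Rightarrow> nat \<Rightarrow> real" and d :: "nat \<Rightarrow> real"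
  assumes XE: "\<And>i k. i<n \<Longrightarrow> k<n \<Longrightarrow> Xf i k = (\<Sum>m<n. Lf i m * d m * Lf k m)"
   and dpos: "\<And>m. m<n \<Longrightarrow> d m > 0"
   and up: "\<And>i k. i<n \<Longrightarrow> k<n \<Longrightarrow> i<k \<Longrightarrow> Lf i k = 0"
   and diag: "\<And>i. i<n \<Longrightarrow> Lf i i = 1"
   and Xz: "\<And>i k. i<n \<Longrightarrow> k<i \<Longrightarrow> (i,k) \<notin> V \<Longrightarrow> Xf i k = 0"
   and filled: "filled_pattern V"
  shows "i<n \<Longrightarrow> k<i \<Longrightarrow> (i,k)\<notin>V \<Longrightarrow> Lf i k = 0"
proof (induction k arbitrary: i rule: less_induct)
  case (less k i)
  have kn: "k < n" using less by simp
  have "Xf i k = (\<Sum>m<n. Lf i m * d m * Lf k m)" using XE less kn by simp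
  also have "\<dots> = Lf i k * d k * Lf k k"
  proof (rule sum_single)
    fix m assume m: "m \<in> {..<n}" "m \<noteq> k"
    show "Lf i m * d m * Lf k m = 0"
    proof (cases "k < m")
      case True then show ?thesis using up kn m by simp
    next
      case False
      hence mk: "m < k" using m by simp
      show ?thesis
      proof (rule ccontr)
        assume "Lf i m * d m * Lf k m \<noteq> 0"
        hence nz: "Lf i m \<noteq> 0" "Lf k m \<noteq> 0" by auto
        have "(i,m) \<in> V" using less.IH[OF mk, of i] less.prems mk nz by auto
        moreover have "(k,m) \<in> V" using less.IH[OF mk, of k] kn mk nz by auto
        ultimately have "(i,k) \<in> V" using filled less.prems mk unfolding filled_pattern_def by blast
        thus False using less.prems by simp
      qed
    qed
  qed (use kn in auto)
  also have "\<dots> = Lf i k * d k" using diag kn by simp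
  finally have "Lf i k * d k = 0" using Xz less by simp
  thus ?case using dpos[OF kn] by simp
qed

lemma tri_solve:
  fixes r :: "nat \<Rightarrow> real"
  assumes E: "\<And>c. c<n \<Longrightarrow> (\<Sum>k<n. r k * Lf c k) = (if c = i then 1 else 0)"
    and diag: "\<And>c. c<n \<Longrightarrow> Lf c c = 1"
    and up: "\<And>c k. c<n \<Longrightarrow> k<n \<Longrightarrow> c<k \<Longrightarrow> Lf c k = 0" and i: "i<n"
  shows tri_solve_zero: "c < i \<Longrightarrow> r c = 0" and tri_solve_one: "r i = 1"
proof -
  have S: "(\<Sum>k<n. r k * Lf c k) = r c" if c: "c < n" "\<And>k. k < c \<Longrightarrow> r k = 0" for c
  proof -
    have "(\<Sum>k<n. r k * Lf c k) = r c * Lf c c"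
      using c up apply (intro sum_single) apply auto by (metis linorder_neqE_nat)
    thus ?thesis using diag c by simp
  qed
  show Z: "c < i \<Longrightarrow> r c = 0" for c
  proof (induction c rule: less_induct)
    case (less c)
    have "r c = (\<Sum>k<n. r k * Lf c k)" using S[of c] less i by simp
    also have "\<dots> = 0" using E[of c] less i by simp
    finally show ?case .
  qed
  have "r i = (\<Sum>k<n. r k * Lf i k)" using S[of i] Z i by simp
  also have "\<dots> = 1" using E i by simp
  finally show "r i = 1" .
qed

lemma det_tendsto:
  fixes A :: "'b \<Rightarrow> real mat"
  assumes A: "\<And>t. A t \<in> carrier_mat n n" and A0: "A0 \<in> carrier_mat n n"
   and T: "\<And>i k. i<n \<Longrightarrow> k<n \<Longrightarrow> ((\<lambda>t. A t $$ (i,k)) \<longlongrightarrow> A0 $$ (i,k)) F"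
  shows "((\<lambda>t. det (A t)) \<longlongrightarrow> det A0) F"
proof -
  have e: "(\<lambda>t. det (A t)) = (\<lambda>t. \<Sum> p \<in> {p. p permutes {0 ..< n}}. 
     signof p * (\<Prod> i = 0 ..< n. A t $$ (i, p i)))" using det_def'[OF A] by auto
  show ?thesis unfolding e det_def'[OF A0]
    apply (intro tendsto_sum tendsto_mult tendsto_const tendsto_prod T)
    by (auto simp: permutes_in_image)
qed

lemma adj_tendsto:
  fixes A :: "'b \<Rightarrow> real mat"
  assumes A: "\<And>t. A t \<in> carrier_mat n n" and A0: "A0 \<in> carrier_mat n n"
   and T: "\<And>i k. i<n \<Longrightarrow> k<n \<Longrightarrow> ((\<lambda>t. A t $$ (i,k)) \<longlongrightarrow> A0 $$ (i,k)) F"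
   and i: "i < n" and k: "k < n"
  shows "((\<lambda>t. adj_mat (A t) $$ (i,k)) \<longlongrightarrow> adj_mat A0 $$ (i,k)) F"
proof -
  have e: "adj_mat B $$ (i,k) = (-1)^(k+i) * det (mat_delete B k i)" if "B \<in> carrier_mat n n" for B
    using that i k by (simp add: adj_mat_def cofactor_def)
  have "((\<lambda>t. det (mat_delete (A t) k i)) \<longlongrightarrow> det (mat_delete A0 k i)) F"
  proof (rule det_tendsto[where n="n-1"])
    show "mat_delete (A t) k i \<in> carrier_mat (n - 1) (n - 1)" for t using mat_delete_carrier A by blast
    show "mat_delete A0 k i \<in> carrier_mat (n - 1) (n - 1)" using mat_delete_carrier A0 by blast
    fix a b assume ab: "a < n - 1" "b < n - 1"
    show "((\<lambda>t. mat_delete (A t) k i $$ (a, b)) \<longlongrightarrow> mat_delete A0 k i $$ (a, b)) F"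
    proof -
      have md: "mat_delete B k i $$ (a,b) = B $$ (if a < k then a else Suc a, if b < i then b else Suc b)"
        if "B \<in> carrier_mat n n" for B using that ab unfolding mat_delete_def by auto
      show ?thesis unfolding md[OF A] md[OF A0] using ab by (intro T) auto
    qed
  qed
  hence "((\<lambda>t. (-1)^(k+i) * det (mat_delete (A t) k i)) \<longlongrightarrow> (-1)^(k+i) * det (mat_delete A0 k i)) F"
    by (rule tendsto_mult_left)
  thus ?thesis unfolding e[OF A] e[OF A0] .
qed


lemma sub_set:
  assumes "A \<in> carrier_mat n n" "I \<subseteq> {..<n}"
  shows "{i. i < dim_row A \<and> i \<in> I} = I" "{i. i < dim_col A \<and> i \<in> I} = I"
proof -
  have "dim_row A = n" "dim_col A = n" using assms(1) by auto
  thus "{i. i < dim_row A \<and> i \<in> I} = I" "{i. i < dim_col A \<and> i \<in> I} = I" using assms(2) by auto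
qed

lemma sub_carrier:
  assumes "A \<in> carrier_mat n n" "I \<subseteq> {..<n}" "J \<subseteq> {..<n}"
  shows "submatrix A I J \<in> carrier_mat (card I) (card J)"
proof -
  have "dim_row (submatrix A I J) = card I" unfolding dim_submatrix(1) sub_set(1)[OF assms(1,2)] ..
  moreover have "dim_col (submatrix A I J) = card J" unfolding dim_submatrix(2) sub_set(2)[OF assms(1,3)] ..
  ultimately show ?thesis by (rule carrier_matI)
qed

lemma sub_index:
  assumes "A \<in> carrier_mat n n" "I \<subseteq> {..<n}" "J \<subseteq> {..<n}" "a < card I" "b < card J"
  shows "submatrix A I J $$ (a,b) = A $$ (pick I a, pick J b)"
  by (rule submatrix_index) (unfold sub_set[OF assms(1,2)] sub_set[OF assms(1,3)], fact+)

lemma blk11_alg: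
  fixes Lb Lp Tj Sj :: "nat \<Rightarrow> real" and Tbb Sbb :: "nat \<Rightarrow> nat \<Rightarrow> real"
  assumes F1: "\<And>a. a<m \<Longrightarrow> Sj a + (\<Sum>b<m. Sbb a b * Lb b) = 0"
    and F2: "\<And>a. a<m \<Longrightarrow> Tj a + (\<Sum>b<m. Tbb a b * Lb b) = (\<Sum>b<m. Sbb a b * Lp b)"
    and F3: "Tjj + (\<Sum>b<m. Tj b * Lb b) = c + (\<Sum>b<m. Sj b * Lp b)"
    and symS: "\<And>a b. a<m \<Longrightarrow> b<m \<Longrightarrow> Sbb a b = Sbb b a"
    and symT: "\<And>a b. a<m \<Longrightarrow> b<m \<Longrightarrow> Tbb a b = Tbb b a"
  shows "Tjj + (\<Sum>i<m. Lb i * Tj i) + (\<Sum>i<m. (Tj i + (\<Sum>ia<m. Lb ia * Tbb ia i)) * Lb i) = c"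
proof -
  have 1: "(\<Sum>i<m. (Tj i + (\<Sum>ia<m. Lb ia * Tbb ia i)) * Lb i) = (\<Sum>i<m. (\<Sum>b<m. Sbb i b * Lp b) * Lb i)"
  proof (rule sum.cong[OF refl])
    fix i assume i: "i \<in> {..<m}"
    have "(\<Sum>ia<m. Lb ia * Tbb ia i) = (\<Sum>b<m. Tbb i b * Lb b)" using symT i by (intro sum.cong) auto
    thus "(Tj i + (\<Sum>ia<m. Lb ia * Tbb ia i)) * Lb i = (\<Sum>b<m. Sbb i b * Lp b) * Lb i" using F2 i by simp
  qed
  have 2: "(\<Sum>i<m. (\<Sum>b<m. Sbb i b * Lp b) * Lb i) = (\<Sum>b<m. Lp b * (\<Sum>i<m. Sbb b i * Lb i))"
  proof -
    have "(\<Sum>i<m. (\<Sum>b<m. Sbb i b * Lp b) * Lb i) = (\<Sum>i<m. \<Sum>b<m. Sbb i b * Lp b * Lb i)"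
      by (simp add: sum_distrib_right)
    also have "\<dots> = (\<Sum>b<m. \<Sum>i<m. Sbb i b * Lp b * Lb i)" by (rule sum.swap)
    also have "\<dots> = (\<Sum>b<m. \<Sum>i<m. Lp b * (Sbb b i * Lb i))"
      using symS by (intro sum.cong refl) auto
    also have "\<dots> = (\<Sum>b<m. Lp b * (\<Sum>i<m. Sbb b i * Lb i))" by (simp add: sum_distrib_left)
    finally show ?thesis .
  qed
  have 3: "(\<Sum>b<m. Lp b * (\<Sum>i<m. Sbb b i * Lb i)) = - (\<Sum>b<m. Sj b * Lp b)"
  proof -
    have "(\<Sum>b<m. Lp b * (\<Sum>i<m. Sbb b i * Lb i)) = (\<Sum>b<m. - (Sj b * Lp b))"
    proof (rule sum.cong[OF refl])
      fix b assume "b \<in> {..<m}"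
      hence "(\<Sum>i<m. Sbb b i * Lb i) = - Sj b" using F1[of b] by simp
      thus "Lp b * (\<Sum>i<m. Sbb b i * Lb i) = - (Sj b * Lp b)" by simp
    qed
    thus ?thesis by (simp add: sum_negf)
  qed
  have 4: "(\<Sum>i<m. Lb i * Tj i) = (\<Sum>b<m. Tj b * Lb b)" by (simp add: mult.commute)
  show ?thesis using 1 2 3 4 F3 by linarith
qed

lemma final_blocks:
  fixes S T L0 L' :: "real mat" and c :: real
  assumes Sc: "S \<in> carrier_mat n n" and Tc: "T \<in> carrier_mat n n"
    and L0c: "L0 \<in> carrier_mat n n" and L'c: "L' \<in> carrier_mat n n"
    and Isub: "I \<subseteq> {..<n}" and j: "j < n"
    and symS: "\<And>a b. a<n \<Longrightarrow> b<n \<Longrightarrow> S $$ (a,b) = S $$ (b,a)"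
    and symT: "\<And>a b. a<n \<Longrightarrow> b<n \<Longrightarrow> T $$ (a,b) = T $$ (b,a)"
    and F1: "\<And>a. a < card I \<Longrightarrow> S $$ (pick I a, j) + (\<Sum>b<card I. S $$ (pick I a, pick I b) * L0 $$ (pick I b, j)) = 0"
    and F2: "\<And>a. a < card I \<Longrightarrow> T $$ (pick I a, j) + (\<Sum>b<card I. T $$ (pick I a, pick I b) * L0 $$ (pick I b, j))
              = (\<Sum>b<card I. S $$ (pick I a, pick I b) * L' $$ (pick I b, j))"
    and F3: "T $$ (j, j) + (\<Sum>b<card I. T $$ (j, pick I b) * L0 $$ (pick I b, j))
              = c + (\<Sum>b<card I. S $$ (j, pick I b) * L' $$ (pick I b, j))"
  shows
    "(let m = card I;
          l = submatrix L0 I {j}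
      in four_block_mat (1\<^sub>m 1) (transpose_mat l) (0\<^sub>m m 1) (1\<^sub>m m)
         * four_block_mat (submatrix T {j} {j}) (transpose_mat (submatrix T I {j}))
                          (submatrix T I {j}) (submatrix T I I)
         * four_block_mat (1\<^sub>m 1) (0\<^sub>m 1 m) l (1\<^sub>m m)
       = four_block_mat (mat 1 1 (\<lambda>_. c))
                        (transpose_mat (submatrix S I I * submatrix L' I {j}))
                        (submatrix S I I * submatrix L' I {j})
                        (submatrix T I I))"
proof -
  define m where "m = card I"
  define p where "p = pick I"
  have js: "{j} \<subseteq> {..<n}" using j by auto
  have pj: "pick {j} 0 = j" by (simp add: Least_equality)
  have pI: "p a \<in> I" if "a < m" for a using pick_in_set[of a I] that unfolding m_def p_def by auto
  have pn: "p a < n" if "a < m" for a using pI[OF that] Isub by auto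
  define l where "l = submatrix L0 I {j}"
  define t11 where "t11 = submatrix T {j} {j}"
  define tc where "tc = submatrix T I {j}"
  define TII where "TII = submatrix T I I"
  define SII where "SII = submatrix S I I"
  define lp where "lp = submatrix L' I {j}"
  have lc: "l \<in> carrier_mat m 1" unfolding l_def m_def using sub_carrier[OF L0c Isub js] by simp
  have t11c: "t11 \<in> carrier_mat 1 1" unfolding t11_def using sub_carrier[OF Tc js js] by simp
  have tcc: "tc \<in> carrier_mat m 1" unfolding tc_def m_def using sub_carrier[OF Tc Isub js] by simp
  have TIIc: "TII \<in> carrier_mat m m" unfolding TII_def m_def using sub_carrier[OF Tc Isub Isub] by simp
  have SIIc: "SII \<in> carrier_mat m m" unfolding SII_def m_def using sub_carrier[OF Sc Isub Isub] by simp
  have lpc: "lp \<in> carrier_mat m 1" unfolding lp_def m_def using sub_carrier[OF L'c Isub js] by simp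
  have le: "l $$ (a,0) = L0 $$ (p a, j)" if "a < m" for a
    unfolding l_def p_def using sub_index[OF L0c Isub js, of a 0] that m_def pj by simp
  have t11e: "t11 $$ (0,0) = T $$ (j,j)"
    unfolding t11_def using sub_index[OF Tc js js, of 0 0] pj by simp
  have tce: "tc $$ (a,0) = T $$ (p a, j)" if "a < m" for a
    unfolding tc_def p_def using sub_index[OF Tc Isub js, of a 0] that m_def pj by simp
  have TIIe: "TII $$ (a,b) = T $$ (p a, p b)" if "a < m" "b < m" for a b
    unfolding TII_def p_def using sub_index[OF Tc Isub Isub, of a b] that m_def pj by simp
  have SIIe: "SII $$ (a,b) = S $$ (p a, p b)" if "a < m" "b < m" for a b
    unfolding SII_def p_def using sub_index[OF Sc Isub Isub, of a b] that m_def pj by simp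
  have lpe: "lp $$ (a,0) = L' $$ (p a, j)" if "a < m" for a
    unfolding lp_def p_def using sub_index[OF L'c Isub js, of a 0] that m_def pj by simp
  have AT: "four_block_mat (1\<^sub>m 1) (transpose_mat l) (0\<^sub>m m 1) (1\<^sub>m m)
         * four_block_mat t11 (transpose_mat tc) tc TII
       = four_block_mat (1\<^sub>m 1 * t11 + transpose_mat l * tc) (1\<^sub>m 1 * transpose_mat tc + transpose_mat l * TII)
            (0\<^sub>m m 1 * t11 + 1\<^sub>m m * tc) (0\<^sub>m m 1 * transpose_mat tc + 1\<^sub>m m * TII)"
    by (rule mult_four_block_mat) (use lc t11c tcc TIIc in auto)
  let ?P11 = "1\<^sub>m 1 * t11 + transpose_mat l * tc"
  let ?P12 = "1\<^sub>m 1 * transpose_mat tc + transpose_mat l * TII"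
  let ?P21 = "0\<^sub>m m 1 * t11 + 1\<^sub>m m * tc"
  let ?P22 = "0\<^sub>m m 1 * transpose_mat tc + 1\<^sub>m m * TII"
  have P: "?P11 \<in> carrier_mat 1 1" "?P12 \<in> carrier_mat 1 m" "?P21 \<in> carrier_mat m 1" "?P22 \<in> carrier_mat m m"
    using lc t11c tcc TIIc by auto
  have ATB: "four_block_mat ?P11 ?P12 ?P21 ?P22 * four_block_mat (1\<^sub>m 1) (0\<^sub>m 1 m) l (1\<^sub>m m)
     = four_block_mat (?P11 * 1\<^sub>m 1 + ?P12 * l) (?P11 * 0\<^sub>m 1 m + ?P12 * 1\<^sub>m m)
        (?P21 * 1\<^sub>m 1 + ?P22 * l) (?P21 * 0\<^sub>m 1 m + ?P22 * 1\<^sub>m m)"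
    by (rule mult_four_block_mat) (use P lc in auto)
  have Q11: "?P11 * 1\<^sub>m 1 + ?P12 * l = mat 1 1 (\<lambda>_. c)"
  proof (rule eq_matI)
    show "dim_row (?P11 * 1\<^sub>m 1 + ?P12 * l) = dim_row (mat 1 1 (\<lambda>_. c))" using P lc by auto
    show "dim_col (?P11 * 1\<^sub>m 1 + ?P12 * l) = dim_col (mat 1 1 (\<lambda>_. c))" using P lc by auto
    fix a b assume "a < dim_row (mat 1 1 (\<lambda>_. c))" "b < dim_col (mat 1 1 (\<lambda>_. c))"
    hence ab: "a = 0" "b = 0" by auto
    show "(?P11 * 1\<^sub>m 1 + ?P12 * l) $$ (a,b) = mat 1 1 (\<lambda>_. c) $$ (a,b)"
      using lc t11c tcc TIIc unfolding ab
      apply (simp add: scalar_prod_def atLeast0LessThan le t11e tce TIIe)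
      apply (rule blk11_alg[where Sj="\<lambda>a. S $$ (p a, j)" and Sbb="\<lambda>a b. S $$ (p a, p b)" and Lp="\<lambda>b. L' $$ (p b, j)"])
      using F1 F2 F3 symS symT pn j unfolding m_def p_def by auto
  qed
  have Q21: "?P21 * 1\<^sub>m 1 + ?P22 * l = SII * lp"
  proof (rule eq_matI)
    show "dim_row (?P21 * 1\<^sub>m 1 + ?P22 * l) = dim_row (SII * lp)" using P lc SIIc by auto
    show "dim_col (?P21 * 1\<^sub>m 1 + ?P22 * l) = dim_col (SII * lp)" using P lc lpc by auto
    fix a b assume "a < dim_row (SII * lp)" "b < dim_col (SII * lp)"
    hence ab: "a < m" "b = 0" using SIIc lpc by auto
    show "(?P21 * 1\<^sub>m 1 + ?P22 * l) $$ (a,b) = (SII * lp) $$ (a,b)"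
      using lc t11c tcc TIIc SIIc lpc ab apply (simp add: scalar_prod_def atLeast0LessThan le t11e tce TIIe SIIe lpe)
      using F2[of a] ab unfolding m_def p_def by simp
  qed
  have Q12: "?P11 * 0\<^sub>m 1 m + ?P12 * 1\<^sub>m m = transpose_mat (SII * lp)"
  proof (rule eq_matI)
    show "dim_row (?P11 * 0\<^sub>m 1 m + ?P12 * 1\<^sub>m m) = dim_row (transpose_mat (SII * lp))" using P lpc by auto
    show "dim_col (?P11 * 0\<^sub>m 1 m + ?P12 * 1\<^sub>m m) = dim_col (transpose_mat (SII * lp))" using P SIIc by auto
    fix a b assume "a < dim_row (transpose_mat (SII * lp))" "b < dim_col (transpose_mat (SII * lp))"
    hence ab: "a = 0" "b < m" using SIIc lpc by auto
    have sw: "(\<Sum>i<m. L0 $$ (p i, j) * T $$ (p i, p b)) = (\<Sum>i<m. T $$ (p b, p i) * L0 $$ (p i, j))"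
      using symT pn ab by (intro sum.cong) auto
    have F2': "T $$ (p b, j) + (\<Sum>i<m. T $$ (p b, p i) * L0 $$ (p i, j)) = (\<Sum>i<m. S $$ (p b, p i) * L' $$ (p i, j))"
      using F2[of b] ab unfolding m_def p_def by simp
    show "(?P11 * 0\<^sub>m 1 m + ?P12 * 1\<^sub>m m) $$ (a,b) = transpose_mat (SII * lp) $$ (a,b)"
      using lc t11c tcc TIIc SIIc lpc ab apply (simp add: scalar_prod_def atLeast0LessThan le t11e tce TIIe SIIe lpe)
      using sw F2' by simp
  qed
  have Q22: "?P21 * 0\<^sub>m 1 m + ?P22 * 1\<^sub>m m = TII"
    by (rule eq_matI) (use tcc TIIc in auto)
  show ?thesis unfolding Let_def m_def[symmetric] l_def[symmetric] t11_def[symmetric] tc_def[symmetric]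
      TII_def[symmetric] SII_def[symmetric] lp_def[symmetric] AT ATB Q11 Q12 Q21 Q22 ..
qed


lemma pick_bij:
  assumes "finite I"
  shows "bij_betw (pick I) {..<card I} I"
proof -
  have inj: "inj_on (pick I) {..<card I}"
  proof (rule inj_onI)
    fix a b assume ab: "a \<in> {..<card I}" "b \<in> {..<card I}" "pick I a = pick I b"
    show "a = b"
    proof (rule ccontr)
      assume "a \<noteq> b"
      hence "a < b \<or> b < a" by auto
      thus False using ab pick_mono[of b I a] pick_mono[of a I b] by auto
    qed
  qed
  have sub: "pick I ` {..<card I} \<subseteq> I" using pick_in_set by auto
  have "card (pick I ` {..<card I}) = card I" using card_image[OF inj] by simp
  hence "pick I ` {..<card I} = I" using card_subset_eq[OF assms sub] by simp
  thus ?thesis using inj unfolding bij_betw_def by simp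
qed

lemma sum_K:
  fixes f :: "nat \<Rightarrow> real"
  assumes fin: "finite I" and Isub: "I \<subseteq> {..<n}" and j: "j<n" and jI: "j \<notin> I"
    and z: "\<And>k. k<n \<Longrightarrow> k \<notin> insert j I \<Longrightarrow> f k = 0"
  shows "(\<Sum>k<n. f k) = f j + (\<Sum>b<card I. f (pick I b))"
proof -
  have "(\<Sum>k<n. f k) = (\<Sum>k\<in>insert j I. f k)"
    by (rule sum.mono_neutral_right) (use Isub j z in auto)
  also have "\<dots> = f j + (\<Sum>k\<in>I. f k)" using fin jI by simp
  also have "(\<Sum>k\<in>I. f k) = (\<Sum>b<card I. f (pick I b))"
    using sum.reindex_bij_betw[OF pick_bij[OF fin], of f] by simp
  finally show ?thesis .
qed

theorem mainTheorem6:
  fixes n :: nat and V :: "(nat \<times> nat) set"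
    and X Y :: "real mat" and L D :: "real \<Rightarrow> real mat" and L' D' :: "real mat"
  assumes V: "sparsity_pattern n V" and filled: "filled_pattern V"
    and X: "in_SV n V X" and Xpd: "pos_def_mat n X"
    and Y: "in_SV n V Y"
    and fact: "\<exists>\<epsilon>>0. \<forall>t. \<bar>t\<bar> < \<epsilon> \<longrightarrow>
         unit_lower_triangular n (L t) \<and> pos_diagonal n (D t) \<and>
         X + t \<cdot>\<^sub>m Y = L t * D t * transpose_mat (L t)"
    and L'_carr: "L' \<in> carrier_mat n n" and D'_carr: "D' \<in> carrier_mat n n"
    and L'_deriv: "\<forall>i<n. \<forall>k<n. ((\<lambda>t. L t $$ (i,k)) has_real_derivative L' $$ (i,k)) (at 0)"
    and D'_deriv: "\<forall>i<n. \<forall>k<n. ((\<lambda>t. D t $$ (i,k)) has_real_derivative D' $$ (i,k)) (at 0)"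
    and j: "j < n"
  shows
    "(let S = projP V (mat_inv X);
          T = projP V (mat_inv X * Y * mat_inv X);
          I = Iset V j;
          m = card I;
          l = submatrix (L 0) I {j}
      in four_block_mat (1\<^sub>m 1) (transpose_mat l) (0\<^sub>m m 1) (1\<^sub>m m)
         * four_block_mat (submatrix T {j} {j}) (transpose_mat (submatrix T I {j}))
                          (submatrix T I {j}) (submatrix T I I)
         * four_block_mat (1\<^sub>m 1) (0\<^sub>m 1 m) l (1\<^sub>m m)
       = four_block_mat (mat 1 1 (\<lambda>_. D' $$ (j,j) / (D 0 $$ (j,j))^2))
                        (transpose_mat (submatrix S I I * submatrix L' I {j}))
                        (submatrix S I I * submatrix L' I {j})
                        (submatrix T I I))"
proof -
  obtain \<epsilon> where \<epsilon>: "\<epsilon> > 0" and fac: "\<And>t. \<bar>t\<bar> < \<epsilon> \<Longrightarrow> unit_lower_triangular n (L t) \<and>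
      pos_diagonal n (D t) \<and> X + t \<cdot>\<^sub>m Y = L t * D t * transpose_mat (L t)"
    using fact by blast
  have Xc: "X \<in> carrier_mat n n" and XT: "transpose_mat X = X"
    and Xz: "\<And>a b. a<n \<Longrightarrow> b<n \<Longrightarrow> (max a b, min a b) \<notin> V \<Longrightarrow> X $$ (a,b) = 0"
    using X unfolding in_SV_def by auto
  have Yc: "Y \<in> carrier_mat n n" and YT: "transpose_mat Y = Y"
    and Yz: "\<And>a b. a<n \<Longrightarrow> b<n \<Longrightarrow> (max a b, min a b) \<notin> V \<Longrightarrow> Y $$ (a,b) = 0"
    using Y unfolding in_SV_def by auto
  define Xt where "Xt t = X + t \<cdot>\<^sub>m Y" for t
  have Xtc: "\<And>t. Xt t \<in> carrier_mat n n" using Xc Yc by (simp add: Xt_def)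
  have Xte: "\<And>t a b. a<n \<Longrightarrow> b<n \<Longrightarrow> Xt t $$ (a,b) = X $$ (a,b) + t * Y $$ (a,b)"
    using Xc Yc by (simp add: Xt_def)
  have Xt0: "Xt 0 = X" by (rule eq_matI) (use Xc Yc Xte in \<open>auto simp: Xt_def\<close>)
  have Xt_tend: "((\<lambda>t. Xt t $$ (a,b)) \<longlongrightarrow> X $$ (a,b)) (at 0)" if ab: "a<n" "b<n" for a b
  proof -
    have "((\<lambda>t. X$$(a,b) + t * Y$$(a,b)) \<longlongrightarrow> X$$(a,b) + 0 * Y$$(a,b)) (at 0)"
      by (intro tendsto_intros)
    thus ?thesis using Xte[OF ab] by simp
  qed
  have dX: "det X \<noteq> 0"
  proof
    assume "det X = 0"
    then obtain v where v: "v \<in> carrier_vec n" "v \<noteq> 0\<^sub>v n" "X *\<^sub>v v = 0\<^sub>v n"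
      using det_0_iff_vec_prod_zero_field[OF Xc] by blast
    then have "v \<bullet> (X *\<^sub>v v) > 0" using Xpd unfolding pos_def_mat_def by blast
    moreover have "v \<bullet> (X *\<^sub>v v) = 0" using v by simp
    ultimately show False by simp
  qed
  define \<delta> where "\<delta> t = det (Xt t)" for t
  have \<delta>_tend: "(\<delta> \<longlongrightarrow> det X) (at 0)" unfolding \<delta>_def
    using det_tendsto[of Xt n X, OF Xtc Xc Xt_tend] by simp
  have \<delta>0: "\<delta> 0 \<noteq> 0" using dX Xt0 \<delta>_def by simp
  have ev_at: "eventually (\<lambda>t. \<delta> t \<noteq> 0) (at 0)" using tendsto_imp_eventually_ne[OF \<delta>_tend dX] .
  have ev_eps: "eventually (\<lambda>t. \<bar>t\<bar> < \<epsilon>) (nhds (0::real))"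
    using \<epsilon> by (auto simp: eventually_nhds_metric dist_real_def intro!: exI[of _ \<epsilon>])
  have ev_good: "eventually (\<lambda>t. \<delta> t \<noteq> 0 \<and> \<bar>t\<bar> < \<epsilon>) (nhds (0::real))"
  proof -
    have "eventually (\<lambda>t. \<delta> t \<noteq> 0) (nhds (0::real))" using ev_at \<delta>0 by (simp add: eventually_nhds_conv_at)
    then show ?thesis using ev_eps by (rule eventually_conj)
  qed
  define Z where "Z t = (1 / \<delta> t) \<cdot>\<^sub>m adj_mat (Xt t)" for t
  have Zc: "\<And>t. Z t \<in> carrier_mat n n" unfolding Z_def using adj_mat(1)[OF Xtc] by simp
  have ZX: "Z t * Xt t = 1\<^sub>m n" if "\<delta> t \<noteq> 0" for t
  proof -
    have "Z t * Xt t = (1 / \<delta> t) \<cdot>\<^sub>m (adj_mat (Xt t) * Xt t)"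
      unfolding Z_def by (rule mult_smult_assoc_mat[OF adj_mat(1)[OF Xtc] Xtc])
    also have "\<dots> = 1\<^sub>m n" unfolding adj_mat(3)[OF Xtc] \<delta>_def[symmetric]
      by (rule eq_matI) (use that in auto)
    finally show ?thesis .
  qed
  have XZ: "Xt t * Z t = 1\<^sub>m n" if "\<delta> t \<noteq> 0" for t
  proof -
    have "Xt t * Z t = (1 / \<delta> t) \<cdot>\<^sub>m (Xt t * adj_mat (Xt t))"
      unfolding Z_def by (rule mult_smult_distrib[OF Xtc adj_mat(1)[OF Xtc]])
    also have "\<dots> = 1\<^sub>m n" unfolding adj_mat(2)[OF Xtc] \<delta>_def[symmetric]
      by (rule eq_matI) (use that in auto)
    finally show ?thesis .
  qed
  define Z0 where "Z0 = Z 0"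
  have Z0c: "Z0 \<in> carrier_mat n n" using Zc Z0_def by simp
  have ZX0: "Z0 * X = 1\<^sub>m n" and XZ0: "X * Z0 = 1\<^sub>m n" using ZX[OF \<delta>0] XZ[OF \<delta>0] Xt0 Z0_def by auto
  have minv: "mat_inv X = Z0"
  proof -
    have "X \<in> Units (ring_mat TYPE(real) n ())" by (rule det_non_zero_imp_unit[OF Xc dX])
    hence "mat_inverse X \<noteq> None" using mat_inverse(1)[OF Xc, of "()"] by blast
    then obtain B where B: "mat_inverse X = Some B" by auto
    from mat_inverse(2)[OF Xc B] have BX: "B * X = 1\<^sub>m n" and Bc: "B \<in> carrier_mat n n" by auto
    have "B = B * (X * Z0)" using XZ0 Bc by simp
    also have "\<dots> = (B * X) * Z0" using Bc Xc Z0c by simp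
    also have "\<dots> = Z0" using BX Z0c by simp
    finally show ?thesis unfolding mat_inv_def B by simp
  qed
  have Z0T: "transpose_mat Z0 = Z0"
  proof -
    have "transpose_mat Z0 * X = 1\<^sub>m n"
      using transpose_mult[OF Xc Z0c] XZ0 XT by simp
    hence "transpose_mat Z0 = transpose_mat Z0 * (X * Z0)" using XZ0 Z0c by simp
    also have "\<dots> = (transpose_mat Z0 * X) * Z0" using Xc Z0c by simp
    also have "\<dots> = Z0" using \<open>transpose_mat Z0 * X = 1\<^sub>m n\<close> Z0c by simp
    finally show ?thesis .
  qed
  define W where "W = Z0 * Y * Z0"
  have Wc: "W \<in> carrier_mat n n" unfolding W_def using Z0c Yc by simp
  have WT: "transpose_mat W = W"
    unfolding W_def using transpose_mult[of "Z0 * Y" n n Z0 n] transpose_mult[OF Z0c Yc] Z0c Yc Z0T YT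
    by simp
  have Z_tend: "((\<lambda>t. Z t $$ (a,b)) \<longlongrightarrow> Z0 $$ (a,b)) (at 0)" if ab: "a<n" "b<n" for a b
  proof -
    have e: "Z t $$ (a,b) = (1 / \<delta> t) * adj_mat (Xt t) $$ (a,b)" for t
    proof -
      have "dim_row (adj_mat (Xt t)) = n" "dim_col (adj_mat (Xt t)) = n"
        using adj_mat(1)[OF Xtc[of t]] by auto
      thus ?thesis unfolding Z_def using ab by simp
    qed
    have "((\<lambda>t. (1 / \<delta> t) * adj_mat (Xt t) $$ (a,b)) \<longlongrightarrow> (1 / det X) * adj_mat X $$ (a,b)) (at 0)"
      by (intro tendsto_mult tendsto_divide tendsto_const \<delta>_tend adj_tendsto[OF Xtc Xc Xt_tend ab] dX)
    moreover have "Z0 $$ (a,b) = (1 / det X) * adj_mat X $$ (a,b)" using e[of 0] Xt0 \<delta>_def Z0_def by simp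
    ultimately show ?thesis unfolding e by simp
  qed
  have Zrel: "Z t + t \<cdot>\<^sub>m (Z t * Y * Z0) = Z0" if "\<delta> t \<noteq> 0" for t
  proof -
    have "Z t * X + t \<cdot>\<^sub>m (Z t * Y) = 1\<^sub>m n"
      using ZX[OF that] unfolding Xt_def
      using mult_add_distrib_mat[OF Zc Xc smult_carrier_mat[OF Yc]] mult_smult_distrib[OF Zc Yc] by simp
    hence "(Z t * X + t \<cdot>\<^sub>m (Z t * Y)) * Z0 = Z0" using Z0c by simp
    moreover have "(Z t * X + t \<cdot>\<^sub>m (Z t * Y)) * Z0 = Z t * X * Z0 + t \<cdot>\<^sub>m (Z t * Y * Z0)"
    proof -
      have c1: "Z t * X \<in> carrier_mat n n" "Z t * Y \<in> carrier_mat n n" using Zc[of t] Xc Yc by auto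
      show ?thesis using add_mult_distrib_mat[OF c1(1) smult_carrier_mat[OF c1(2)] Z0c]
        mult_smult_assoc_mat[OF c1(2) Z0c] by simp
    qed
    moreover have "Z t * X * Z0 = Z t" using assoc_mult_mat[OF Zc[of t] Xc Z0c] XZ0 Zc[of t] by simp
    ultimately show ?thesis by simp
  qed
  have Z_deriv: "((\<lambda>t. Z t $$ (a,b)) has_real_derivative - W $$ (a,b)) (at 0)" if ab: "a<n" "b<n" for a b
  proof -
    define G where "G t = (\<Sum>c<n. Z t $$ (a,c) * (Y * Z0) $$ (c,b))" for t
    have G_tend: "(G \<longlongrightarrow> W $$ (a,b)) (at 0)"
    proof -
      have "(G \<longlongrightarrow> (\<Sum>c<n. Z0 $$ (a,c) * (Y * Z0) $$ (c,b))) (at 0)"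
        unfolding G_def using ab by (intro tendsto_intros Z_tend) auto
      moreover have "W $$ (a,b) = (\<Sum>c<n. Z0 $$ (a,c) * (Y * Z0) $$ (c,b))"
        unfolding W_def assoc_mult_mat[OF Z0c Yc Z0c] by (rule mult_entry[OF Z0c mult_carrier_mat[OF Yc Z0c] ab])
      ultimately show ?thesis by simp
    qed
    have Gq: "Z t $$ (a,b) = Z0 $$ (a,b) - t * G t" if "\<delta> t \<noteq> 0" for t
    proof -
      have "(Z t + t \<cdot>\<^sub>m (Z t * Y * Z0)) $$ (a,b) = Z0 $$ (a,b)" using Zrel[OF that] by simp
      moreover have "(Z t * Y * Z0) $$ (a,b) = G t"
        unfolding G_def assoc_mult_mat[OF Zc Yc Z0c] by (rule mult_entry[OF Zc mult_carrier_mat[OF Yc Z0c] ab])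
      moreover have "Z t * Y * Z0 \<in> carrier_mat n n" using Zc[of t] Yc Z0c by simp
      moreover have "\<forall>M \<in> carrier_mat n n. (Z t + t \<cdot>\<^sub>m M) $$ (a,b) = Z t $$(a,b) + t * M $$(a,b)"
        using Zc[of t] ab by auto
      ultimately have "Z t $$(a,b) + t * G t = Z0 $$ (a,b)" by (simp only: Ball_def)
      thus ?thesis by linarith
    qed
    have "((\<lambda>y. (Z y $$ (a,b) - Z 0 $$ (a,b)) / (y - 0)) \<longlongrightarrow> - W $$ (a,b)) (at 0)"
    proof (rule Lim_transform_eventually)
      show "((\<lambda>y. - G y) \<longlongrightarrow> - W $$ (a,b)) (at 0)" using G_tend by (intro tendsto_intros)
      show "eventually (\<lambda>y. - G y = (Z y $$ (a,b) - Z 0 $$ (a,b)) / (y - 0)) (at 0)"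
        using ev_at eventually_at_filter[of "\<lambda>y. y \<noteq> 0" 0 UNIV]
      proof -
        have "eventually (\<lambda>y. y \<noteq> 0) (at (0::real))" by (simp add: eventually_at_filter)
        with ev_at show ?thesis
          by eventually_elim (auto simp: Gq Z0_def[symmetric])
      qed
    qed
    thus ?thesis unfolding has_field_derivative_iff .
  qed

  define I where "I = Iset V j"
  have Lc: "L t \<in> carrier_mat n n" and Ldiag: "\<And>i. i<n \<Longrightarrow> L t $$ (i,i) = 1"
    and Lup: "\<And>i k. i<n \<Longrightarrow> k<n \<Longrightarrow> i<k \<Longrightarrow> L t $$ (i,k) = 0"
    and Dc: "D t \<in> carrier_mat n n" and Ddg: "diagonal_mat (D t)" and Dpos: "\<And>i. i<n \<Longrightarrow> D t $$ (i,i) > 0"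
    and Xfac: "Xt t = L t * D t * transpose_mat (L t)"
    if "\<bar>t\<bar> < \<epsilon>" for t
    using fac[OF that] unfolding unit_lower_triangular_def pos_diagonal_def Xt_def by auto
  have Lsp: "L t $$ (i,k) = 0" if t: "\<bar>t\<bar> < \<epsilon>" and "i<n" "k<i" "(i,k)\<notin>V" for t i k
  proof (rule chol_sparse[where Xf="\<lambda>i k. Xt t $$ (i,k)" and Lf="\<lambda>i k. L t $$ (i,k)"
        and d="\<lambda>m. D t $$ (m,m)" and n=n and V=V])
    fix i k assume ik: "i<n" "k<n"
    have "Xt t $$ (i,k) = (L t * D t * transpose_mat (L t)) $$ (i,k)" using Xfac[OF t] by simp
    also have "\<dots> = (\<Sum>a<n. L t $$ (i,a) * D t $$ (a,a) * transpose_mat (L t) $$ (a,k))"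
      by (rule diag_mult_entry[OF Lc[OF t] Dc[OF t] _ Ddg[OF t] ik]) (use Lc[OF t] in simp)
    also have "\<dots> = (\<Sum>a<n. L t $$ (i,a) * D t $$ (a,a) * L t $$ (k,a))"
      using Lc[OF t] ik by (intro sum.cong) auto
    finally show "Xt t $$ (i,k) = (\<Sum>m<n. L t $$ (i,m) * D t $$ (m,m) * L t $$ (k,m))" .
  next
    fix i k assume ik: "i<n" "k<i" "(i,k)\<notin>V"
    then show "Xt t $$ (i,k) = 0" using Xte Xz Yz by (simp add: max_def min_def)
  qed (use that Dpos Lup Ldiag filled in auto)
  have Lcol: "L t $$ (k,j) = 0" if t: "\<bar>t\<bar> < \<epsilon>" and k: "k<n" "k \<notin> insert j I" for t k
  proof (cases "k < j")
    case True then show ?thesis using Lup[OF t k(1) j] by simp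
  next
    case False
    hence "j < k" "(k,j) \<notin> V" using k unfolding I_def Iset_def by auto
    then show ?thesis using Lsp[OF t k(1)] by simp
  qed
  define h where "h i t = (\<Sum>k<n. Z t $$ (i,k) * L t $$ (k,j))" for i t
  have hval: "h i t = (if i = j then 1 / D t $$ (j,j) else 0)"
    if t: "\<bar>t\<bar> < \<epsilon>" "\<delta> t \<noteq> 0" and i: "i<n" "j \<le> i" for t i
  proof -
    define M where "M = Z t * L t"
    have Mc: "M \<in> carrier_mat n n" using Zc[of t] Lc[OF t(1)] M_def by simp
    have LTc: "transpose_mat (L t) \<in> carrier_mat n n" using Lc[OF t(1)] by simp
    have "M * D t * transpose_mat (L t) = Z t * Xt t"
      unfolding M_def Xfac[OF t(1)]
      using assoc_mult_mat[OF Zc Lc[OF t(1)] Dc[OF t(1)]]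
        assoc_mult_mat[OF Zc mult_carrier_mat[OF Lc[OF t(1)] Dc[OF t(1)]] LTc]
      by simp
    hence MDL: "M * D t * transpose_mat (L t) = 1\<^sub>m n" using ZX[OF t(2)] by simp
    define r where "r k = M $$ (i,k) * D t $$ (k,k)" for k
    have E: "(\<Sum>k<n. r k * L t $$ (c,k)) = (if c = i then 1 else 0)" if c: "c<n" for c
    proof -
      have "(M * D t * transpose_mat (L t)) $$ (i,c) = (\<Sum>a<n. M $$ (i,a) * D t $$ (a,a) * transpose_mat (L t) $$ (a,c))"
        by (rule diag_mult_entry[OF Mc Dc[OF t(1)] LTc Ddg[OF t(1)] i(1) c])
      also have "\<dots> = (\<Sum>k<n. r k * L t $$ (c,k))"
        unfolding r_def using Lc[OF t(1)] c by (intro sum.cong) auto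
      finally show ?thesis using MDL i c by auto
    qed
    have Mij: "M $$ (i,j) = h i t" unfolding M_def h_def by (rule mult_entry[OF Zc Lc[OF t(1)] i(1) j])
    show ?thesis
    proof (cases "i = j")
      case True
      have "r i = 1" by (rule tri_solve_one[OF E Ldiag[OF t(1)] Lup[OF t(1)] i(1)]) auto
      thus ?thesis using True Mij Dpos[OF t(1) j] unfolding r_def by (simp add: field_simps)
    next
      case False
      hence "j < i" using i by simp
      have "r j = 0" by (rule tri_solve_zero[OF E Ldiag[OF t(1)] Lup[OF t(1)] i(1) \<open>j<i\<close>]) auto
      thus ?thesis using False Mij Dpos[OF t(1) j] unfolding r_def by simp
    qed
  qed
  have h_deriv: "((h i) has_real_derivative (\<Sum>k<n. - W $$ (i,k) * L 0 $$ (k,j) + L' $$ (k,j) * Z0 $$ (i,k))) (at 0)"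
    if i: "i<n" for i
    unfolding h_def Z0_def
    by (intro DERIV_sum DERIV_mult Z_deriv i) (use L'_deriv j in auto)
  have E1': "(\<Sum>k<n. - W $$ (i,k) * L 0 $$ (k,j) + L' $$ (k,j) * Z0 $$ (i,k)) = 0"
    if i: "i \<in> I" for i
  proof -
    have iI: "i < n" "j < i" using i V unfolding I_def Iset_def sparsity_pattern_def by auto
    have "DERIV (h i) 0 :> 0 \<longleftrightarrow> DERIV (\<lambda>_. 0::real) 0 :> 0"
      by (rule DERIV_cong_ev[OF refl _ refl]) (use ev_good iI in \<open>auto elim!: eventually_mono simp: hval\<close>)
    hence "DERIV (h i) 0 :> 0" by simp
    thus ?thesis using h_deriv[OF iI(1)] DERIV_unique by blast
  qed
  have E2': "(\<Sum>k<n. - W $$ (j,k) * L 0 $$ (k,j) + L' $$ (k,j) * Z0 $$ (j,k)) = - (D' $$ (j,j) * inverse (D 0 $$ (j,j) ^ 2))"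
  proof -
    have D0: "D 0 $$ (j,j) \<noteq> 0" using Dpos[of 0 j] \<epsilon> j by simp
    have d1: "DERIV (\<lambda>t. inverse (D t $$ (j,j))) 0 :> - (D' $$ (j,j) * inverse (D 0 $$ (j,j) ^ Suc (Suc 0)))"
      by (rule DERIV_inverse_fun[where f="\<lambda>t. D t $$ (j,j)", OF _ D0]) (use D'_deriv j in auto)
    have "DERIV (h j) 0 :> - (D' $$ (j,j) * inverse (D 0 $$ (j,j) ^ 2)) \<longleftrightarrow>
          DERIV (\<lambda>t. inverse (D t $$ (j,j))) 0 :> - (D' $$ (j,j) * inverse (D 0 $$ (j,j) ^ Suc (Suc 0)))"
      by (rule DERIV_cong_ev[OF refl]) (use ev_good j in \<open>auto elim!: eventually_mono simp: hval inverse_eq_divide numeral_2_eq_2\<close>)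
    hence "DERIV (h j) 0 :> - (D' $$ (j,j) * inverse (D 0 $$ (j,j) ^ 2))" using d1 by simp
    thus ?thesis using h_deriv[OF j] DERIV_unique by blast
  qed
  have E1: "(\<Sum>k<n. Z0 $$ (i,k) * L 0 $$ (k,j)) = 0" if i: "i \<in> I" for i
  proof -
    have iI: "i < n" "j < i" using i V unfolding I_def Iset_def sparsity_pattern_def by auto
    have "h i 0 = 0" using hval[of 0 i] \<epsilon> \<delta>0 iI by simp
    thus ?thesis unfolding h_def Z0_def .
  qed
  have L'z: "L' $$ (k,j) = 0" if k: "k<n" "k \<notin> I" for k
  proof -
    have "DERIV (\<lambda>t. L t $$ (k,j)) 0 :> 0 \<longleftrightarrow> DERIV (\<lambda>_. if k = j then 1 else 0::real) 0 :> 0"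
      by (rule DERIV_cong_ev[OF refl _ refl]) (use ev_eps k j in \<open>auto elim!: eventually_mono simp: Ldiag Lcol\<close>)
    hence "DERIV (\<lambda>t. L t $$ (k,j)) 0 :> 0" by simp
    thus ?thesis using L'_deriv k j DERIV_unique by blast
  qed

  have Isub: "I \<subseteq> {..<n}" and jI: "j \<notin> I" and Igt: "\<And>i. i \<in> I \<Longrightarrow> j < i \<and> (i,j) \<in> V"
    using V unfolding I_def Iset_def sparsity_pattern_def by auto
  have Ifin: "finite I" using Isub finite_subset by blast
  have pI: "\<And>b. b < card I \<Longrightarrow> pick I b \<in> I" using pick_in_set by auto
  have Kpat: "(max a b, min a b) \<in> V" if ab: "a \<in> insert j I" "b \<in> insert j I" for a b
  proof -
    have an: "a < n" "b < n" using ab Isub j by auto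
    consider "a = b" | "a = j" "b \<in> I" | "b = j" "a \<in> I" | "a \<in> I" "b \<in> I" "a \<noteq> b" using ab by auto
    thus ?thesis
    proof cases
      case 1 thus ?thesis using V an unfolding sparsity_pattern_def by simp
    next
      case 2 thus ?thesis using Igt[of b] by (simp add: max_def min_def)
    next
      case 3 thus ?thesis using Igt[of a] by (simp add: max_def min_def)
    next
      case 4
      hence "max a b > min a b" "min a b > j" "(max a b, j) \<in> V" "(min a b, j) \<in> V"
        using Igt[of a] Igt[of b] by (auto simp: max_def min_def)
      thus ?thesis using filled[unfolded filled_pattern_def, rule_format, of "min a b" "max a b" j] by blast
    qed
  qed
  have Wdim: "dim_row W = n" "dim_col W = n" using Wc by auto
  have Z0dim: "dim_row Z0 = n" "dim_col Z0 = n" using Z0c by auto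
  define S where "S = projP V Z0"
  define T where "T = projP V W"
  have Sc: "S \<in> carrier_mat n n" and Tc: "T \<in> carrier_mat n n"
    unfolding S_def T_def projP_def using Wdim Z0dim by auto
  have Se: "S $$ (a,b) = (if (max a b, min a b) \<in> V then Z0 $$ (a,b) else 0)" if "a<n" "b<n" for a b
    unfolding S_def projP_def using that Z0dim by simp
  have Te: "T $$ (a,b) = (if (max a b, min a b) \<in> V then W $$ (a,b) else 0)" if "a<n" "b<n" for a b
    unfolding T_def projP_def using that Wdim by simp
  have Z0s: "Z0 $$ (a,b) = Z0 $$ (b,a)" if "a<n" "b<n" for a b
  proof -
    have "transpose_mat Z0 $$ (b,a) = Z0 $$ (a,b)" using that Z0dim by simp
    thus ?thesis using Z0T by simp
  qed
  have Ws: "W $$ (a,b) = W $$ (b,a)" if "a<n" "b<n" for a b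
  proof -
    have "transpose_mat W $$ (b,a) = W $$ (a,b)" using that Wdim by simp
    thus ?thesis using WT by simp
  qed
  have symS: "S $$ (a,b) = S $$ (b,a)" if "a<n" "b<n" for a b
    using Se[of a b] Se[of b a] Z0s[of a b] that by (simp add: max.commute min.commute)
  have symT: "T $$ (a,b) = T $$ (b,a)" if "a<n" "b<n" for a b
    using Te[of a b] Te[of b a] Ws[of a b] that by (simp add: max.commute min.commute)
  have SK: "S $$ (a,b) = Z0 $$ (a,b)" if "a \<in> insert j I" "b \<in> insert j I" for a b
    using Se[of a b] Kpat[OF that] that Isub j by auto
  have TK: "T $$ (a,b) = W $$ (a,b)" if "a \<in> insert j I" "b \<in> insert j I" for a b
    using Te[of a b] Kpat[OF that] that Isub j by auto
  have L00: "L 0 $$ (j,j) = 1" using Ldiag[of 0 j] \<epsilon> j by simp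
  have L'jj: "L' $$ (j,j) = 0" using L'z[OF j jI] .
  have L0c: "L 0 \<in> carrier_mat n n" using Lc[of 0] \<epsilon> by simp
  have Lcol0: "\<And>k. k<n \<Longrightarrow> k \<notin> insert j I \<Longrightarrow> L 0 $$ (k,j) = 0" using Lcol[of 0] \<epsilon> by simp
  have F1: "S $$ (pick I a, j) + (\<Sum>b<card I. S $$ (pick I a, pick I b) * L 0 $$ (pick I b, j)) = 0"
    if a: "a < card I" for a
  proof -
    have i: "pick I a \<in> I" using pI[OF a] .
    have "(\<Sum>k<n. Z0 $$ (pick I a,k) * L 0 $$ (k,j))
        = Z0 $$ (pick I a, j) * L 0 $$ (j,j) + (\<Sum>b<card I. Z0 $$ (pick I a, pick I b) * L 0 $$ (pick I b, j))"
      by (rule sum_K[OF Ifin Isub j jI]) (simp add: Lcol0)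
    moreover have "(\<Sum>b<card I. Z0 $$ (pick I a, pick I b) * L 0 $$ (pick I b, j))
        = (\<Sum>b<card I. S $$ (pick I a, pick I b) * L 0 $$ (pick I b, j))"
      using SK i pI by (intro sum.cong) auto
    ultimately show ?thesis using E1[OF i] SK[of "pick I a" j] i L00 by simp
  qed
  have F2gen: "W $$ (i, j) + (\<Sum>b<card I. W $$ (i, pick I b) * L 0 $$ (pick I b, j))
              = (\<Sum>b<card I. Z0 $$ (i, pick I b) * L' $$ (pick I b, j))
                - (\<Sum>k<n. - W $$ (i,k) * L 0 $$ (k,j) + L' $$ (k,j) * Z0 $$ (i,k))"
    for i
  proof -
    have "(\<Sum>k<n. - W $$ (i,k) * L 0 $$ (k,j) + L' $$ (k,j) * Z0 $$ (i,k))
       = (- W $$ (i,j) * L 0 $$ (j,j) + L' $$ (j,j) * Z0 $$ (i,j))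
         + (\<Sum>b<card I. - W $$ (i,pick I b) * L 0 $$ (pick I b,j) + L' $$ (pick I b,j) * Z0 $$ (i,pick I b))"
      by (rule sum_K[OF Ifin Isub j jI]) (simp add: Lcol0 L'z)
    also have "(\<Sum>b<card I. - W $$ (i,pick I b) * L 0 $$ (pick I b,j) + L' $$ (pick I b,j) * Z0 $$ (i,pick I b))
       = - (\<Sum>b<card I. W $$ (i, pick I b) * L 0 $$ (pick I b, j)) + (\<Sum>b<card I. Z0 $$ (i, pick I b) * L' $$ (pick I b, j))"
      by (simp add: sum.distrib sum_negf sum_subtractf mult.commute)
    finally show ?thesis using L00 L'jj by simp
  qed
  have F2: "T $$ (pick I a, j) + (\<Sum>b<card I. T $$ (pick I a, pick I b) * L 0 $$ (pick I b, j))
              = (\<Sum>b<card I. S $$ (pick I a, pick I b) * L' $$ (pick I b, j))"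
    if a: "a < card I" for a
  proof -
    have i: "pick I a \<in> I" using pI[OF a] .
    have s1: "(\<Sum>b<card I. T $$ (pick I a, pick I b) * L 0 $$ (pick I b, j)) = (\<Sum>b<card I. W $$ (pick I a, pick I b) * L 0 $$ (pick I b, j))"
      using TK i pI by (intro sum.cong) auto
    have s2: "(\<Sum>b<card I. S $$ (pick I a, pick I b) * L' $$ (pick I b, j)) = (\<Sum>b<card I. Z0 $$ (pick I a, pick I b) * L' $$ (pick I b, j))"
      using SK i pI by (intro sum.cong) auto
    show ?thesis unfolding s1 s2 using F2gen[of "pick I a"] E1'[OF i] TK[of "pick I a" j] i by simp
  qed
  define c where "c = D' $$ (j,j) / (D 0 $$ (j,j))^2"
  have F3: "T $$ (j, j) + (\<Sum>b<card I. T $$ (j, pick I b) * L 0 $$ (pick I b, j))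
              = c + (\<Sum>b<card I. S $$ (j, pick I b) * L' $$ (pick I b, j))"
  proof -
    have s1: "(\<Sum>b<card I. T $$ (j, pick I b) * L 0 $$ (pick I b, j)) = (\<Sum>b<card I. W $$ (j, pick I b) * L 0 $$ (pick I b, j))"
      using TK pI by (intro sum.cong) auto
    have s2: "(\<Sum>b<card I. S $$ (j, pick I b) * L' $$ (pick I b, j)) = (\<Sum>b<card I. Z0 $$ (j, pick I b) * L' $$ (pick I b, j))"
      using SK pI by (intro sum.cong) auto
    show ?thesis unfolding s1 s2 c_def using F2gen[of j] E2' TK[of j j] by (simp add: inverse_eq_divide)
  qed
  have FB: "(let m = card I;
          l = submatrix (L 0) I {j}
      in four_block_mat (1\<^sub>m 1) (transpose_mat l) (0\<^sub>m m 1) (1\<^sub>m m)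
         * four_block_mat (submatrix T {j} {j}) (transpose_mat (submatrix T I {j}))
                          (submatrix T I {j}) (submatrix T I I)
         * four_block_mat (1\<^sub>m 1) (0\<^sub>m 1 m) l (1\<^sub>m m)
       = four_block_mat (mat 1 1 (\<lambda>_. c))
                        (transpose_mat (submatrix S I I * submatrix L' I {j}))
                        (submatrix S I I * submatrix L' I {j})
                        (submatrix T I I))"
    by (rule final_blocks[OF Sc Tc L0c L'_carr Isub j symS symT F1 F2 F3])
  show ?thesis using FB unfolding Let_def minv S_def T_def W_def I_def c_def .
qed


end
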